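(* $\mathsf{AUC}_{[0,1]}\not\le_W *\text{-}\mathsf{WWKL}$.
   Context: A represented space is a pair $(X,\delta_X)$ with $\delta_X:\subseteq\mathbb{N}^\mathbb{N}\to X$ a partial surjection; $[0,1]$ carries its Cauchy representation. A realizer of $f:\subseteq X\rightrightarrows Y$ is a partial $F$ with $\delta_Y F(p)\in f(\delta_X(p))$ for all $p\in\mathrm{dom}(f\circ\delta_X)$. $f\le_W g$ if there are computable partial $H,K:\subseteq\mathbb{N}^\mathbb{N}\to\mathbb{N}^\mathbb{N}$ such that $p\mapsto H\langle p,GK(p)\rangle$ realizes $f$ for every realizer $G$ of $g$. $\mathcal{A}_-([0,1])$ denotes the closed subsets of $[0,1]$ represented by negative information (a name of $A$ enumerates rational open intervals whose union is $[0,1]\setminus A$). $\mathsf C_{[0,1]}:\subseteq\mathcal A_-([0,1])\rightrightarrows[0,1]$, $A\mapsto A$, is defined on nonempty $A$. All-or-unique choice $\mathsf{AUC}_{[0,1]}$ is $\mathsf C_{[0,1]}$ restricted to the sets $[0,1]$ and $\{x\}$, $x\in[0,1]$. $\mathrm{Tr}$ is the set of binary trees $T\subseteq\{0,1\}^*$, represented by characteristic functions; $[T]$ its set of infinite paths; $\mu$ the uniform measure on $2^\mathbb N$ ($\mu(w2^\mathbb N)=2^{-|w|}$). $*\text{-}\mathsf{WWKL}:\subseteq\mathbb N\times\mathrm{Tr}\rightrightarrows2^\mathbb N$, $(n,T)\mapsto[T]$, has domain $\{(n,T):\mu([T])>2^{-n}\}$. *)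

theory Defs
  imports "HOL-Probability.Probability" "HOL-Library.Nat_Bijection"
begin

datatype recf = RZero | RSuc | RProj nat | RComp recf "recf list" | RPrec recf recf | RMu recf

inductive rec_eval :: "recf \<Rightarrow> nat list \<Rightarrow> nat \<Rightarrow> bool" where
  zero: "rec_eval RZero xs 0"
| suc: "rec_eval RSuc (x # xs) (Suc x)"
| proj: "i < length xs \<Longrightarrow> rec_eval (RProj i) xs (xs ! i)"
| comp: "length ys = length gs \<Longrightarrow> (\<forall>i < length gs. rec_eval (gs ! i) xs (ys ! i))
          \<Longrightarrow> rec_eval f ys z \<Longrightarrow> rec_eval (RComp f gs) xs z"
| prec0: "rec_eval f xs y \<Longrightarrow> rec_eval (RPrec f g) (0 # xs) y"
| precS: "rec_eval (RPrec f g) (n # xs) y \<Longrightarrow> rec_eval g (n # y # xs) z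
          \<Longrightarrow> rec_eval (RPrec f g) (Suc n # xs) z"
| mu: "rec_eval f (n # xs) 0 \<Longrightarrow> (\<forall>m < n. \<exists>v. rec_eval f (m # xs) v \<and> 0 < v)
          \<Longrightarrow> rec_eval (RMu f) xs n"

definition total_computable :: "(nat \<Rightarrow> nat) \<Rightarrow> bool" where
  "total_computable a \<longleftrightarrow> (\<exists>e. \<forall>x. rec_eval e [x] (a x))"

type_synonym baire = "nat \<Rightarrow> nat"

definition assoc_fun :: "(nat \<Rightarrow> nat) \<Rightarrow> baire \<Rightarrow> baire option" where
  "assoc_fun a p =
     (if (\<forall>n. \<exists>k. 0 < a (prod_encode (n, list_encode (map p [0..<k]))))
      then Some (\<lambda>n. a (prod_encode (n, list_encode (map p
                   [0..<(LEAST k. 0 < a (prod_encode (n, list_encode (map p [0..<k]))))]))) - 1)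
      else None)"

definition computable_partial :: "(baire \<Rightarrow> baire option) \<Rightarrow> bool" where
  "computable_partial F \<longleftrightarrow>
     (\<exists>a. total_computable a \<and> (\<forall>p q. F p = Some q \<longrightarrow> assoc_fun a p = Some q))"

definition bpair :: "baire \<Rightarrow> baire \<Rightarrow> baire" where
  "bpair p q = (\<lambda>n. if even n then p (n div 2) else q (n div 2))"

definition bfst :: "baire \<Rightarrow> baire" where "bfst r = (\<lambda>n. r (2 * n))"
definition bsnd :: "baire \<Rightarrow> baire" where "bsnd r = (\<lambda>n. r (2 * n + 1))"

text \<open>A (partial, multi-valued) problem f :<= X =>> Y on represented spaces is given by
  representations dX, dY (partial surjections from Baire space), its domain D and its values f.\<close>
definition realizes ::
  "(baire \<Rightarrow> 'a option) \<Rightarrow> (baire \<Rightarrow> 'b option) \<Rightarrow> 'a set \<Rightarrow> ('a \<Rightarrow> 'b set)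
     \<Rightarrow> (baire \<Rightarrow> baire option) \<Rightarrow> bool" where
  "realizes dX dY D f F \<longleftrightarrow>
     (\<forall>p x. dX p = Some x \<and> x \<in> D \<longrightarrow> (\<exists>q y. F p = Some q \<and> dY q = Some y \<and> y \<in> f x))"

definition weihrauch_le ::
  "(baire \<Rightarrow> 'a option) \<Rightarrow> (baire \<Rightarrow> 'b option) \<Rightarrow> 'a set \<Rightarrow> ('a \<Rightarrow> 'b set)
   \<Rightarrow> (baire \<Rightarrow> 'c option) \<Rightarrow> (baire \<Rightarrow> 'd option) \<Rightarrow> 'c set \<Rightarrow> ('c \<Rightarrow> 'd set) \<Rightarrow> bool" where
  "weihrauch_le dX dY Df f dU dV Dg g \<longleftrightarrow>
     (\<exists>H K. computable_partial H \<and> computable_partial K \<and>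
        (\<forall>G. realizes dU dV Dg g G \<longrightarrow>
           realizes dX dY Df f
             (\<lambda>p. case K p of None \<Rightarrow> None
                  | Some r \<Rightarrow> (case G r of None \<Rightarrow> None | Some s \<Rightarrow> H (bpair p s)))))"

definition nu :: "nat \<Rightarrow> real" where
  "nu n = (case prod_decode n of (a, b) \<Rightarrow> real_of_int (int_decode a) / real (Suc b))"

definition delta_unit :: "baire \<Rightarrow> real option" where
  "delta_unit p = (if \<exists>x \<in> {0..1}. \<forall>i. \<bar>nu (p i) - x\<bar> \<le> (1/2) ^ i
                   then Some (THE x. x \<in> {0..1} \<and> (\<forall>i. \<bar>nu (p i) - x\<bar> \<le> (1/2) ^ i))
                   else None)"

text \<open>Negative information: p(n) = 0 means no interval, p(n) = k+1 lists the rational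
  open interval (nu a, nu b) where (a,b) = prod_decode k; the named set is [0,1] minus the union.\<close>
definition enum_intervals :: "baire \<Rightarrow> real set" where
  "enum_intervals p = (\<Union>n \<in> {n. 0 < p n}.
      (case prod_decode (p n - 1) of (a, b) \<Rightarrow> {nu a <..< nu b}))"

definition delta_closed :: "baire \<Rightarrow> real set option" where
  "delta_closed p = Some ({0..1} - enum_intervals p)"

definition AUC_dom :: "real set set" where
  "AUC_dom = {{0..1}} \<union> {{x} | x. x \<in> {0..1}}"

text \<open>Binary words: bijection nat -> bool list (node m has children 2m+1 (False) and 2m+2 (True)).\<close>
fun word_of_nat :: "nat \<Rightarrow> bool list" where
  "word_of_nat 0 = []"
| "word_of_nat (Suc n) = word_of_nat (n div 2) @ [odd n]"

definition is_tree :: "bool list set \<Rightarrow> bool" where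
  "is_tree T \<longleftrightarrow> (\<forall>w v. w @ v \<in> T \<longrightarrow> w \<in> T)"

definition delta_tree :: "baire \<Rightarrow> bool list set option" where
  "delta_tree q = (if (\<forall>n. q n \<le> 1) \<and> is_tree {word_of_nat n | n. q n = 1}
                   then Some {word_of_nat n | n. q n = 1} else None)"

definition delta_nat_tree :: "baire \<Rightarrow> (nat \<times> bool list set) option" where
  "delta_nat_tree r = (case delta_tree (bsnd r) of None \<Rightarrow> None
                        | Some T \<Rightarrow> Some (bfst r 0, T))"

definition delta_cantor :: "baire \<Rightarrow> (nat \<Rightarrow> bool) option" where
  "delta_cantor q = (if \<forall>n. q n \<le> 1 then Some (\<lambda>n. q n = 1) else None)"

definition paths :: "bool list set \<Rightarrow> (nat \<Rightarrow> bool) set" where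
  "paths T = {f. \<forall>n. map f [0..<n] \<in> T}"

definition cantor_measure :: "(nat \<Rightarrow> bool) measure" where
  "cantor_measure = PiM UNIV (\<lambda>_. measure_pmf (bernoulli_pmf (1/2)))"

definition star_WWKL_dom :: "(nat \<times> bool list set) set" where
  "star_WWKL_dom = {(n, T). is_tree T \<and> measure cantor_measure (paths T) > (1/2) ^ n}"

definition star_WWKL :: "nat \<times> bool list set \<Rightarrow> (nat \<Rightarrow> bool) set" where
  "star_WWKL x = paths (snd x)"

end

theory Submission
  imports Defs
begin


lemma cm_prob: "prob_space cantor_measure"
  unfolding cantor_measure_def by (rule prob_space_PiM) (simp add: prob_space_measure_pmf)

lemma cm_space: "space cantor_measure = UNIV"
  unfolding cantor_measure_def by (simp add: space_PiM)

lemma cm_sets_comp: "{s. s j = b} \<in> sets cantor_measure"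
proof -
  have "(\<lambda>s. s j) \<in> measurable cantor_measure (measure_pmf (bernoulli_pmf (1/2)))"
    unfolding cantor_measure_def by (rule measurable_component_singleton) simp
  then have "(\<lambda>s. s j) -` {b} \<inter> space cantor_measure \<in> sets cantor_measure"
    by (rule measurable_sets) simp
  then show ?thesis by (simp add: cm_space vimage_def)
qed

lemma cm_sets_prefix: "{s. P (map s [0..<k])} \<in> sets cantor_measure"
proof -
  have eq: "{s. P (map s [0..<k])} = (\<Union>w\<in>{w. P w \<and> length w = k}. \<Inter>j\<in>{..<k}. {s. s j = w ! j})"
  proof (intro set_eqI iffI)
    fix s assume "s \<in> {s. P (map s [0..<k])}"
    then show "s \<in> (\<Union>w\<in>{w. P w \<and> length w = k}. \<Inter>j\<in>{..<k}. {s. s j = w ! j})"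
      by (intro UN_I[of "map s [0..<k]"]) auto
  next
    fix s assume "s \<in> (\<Union>w\<in>{w. P w \<and> length w = k}. \<Inter>j\<in>{..<k}. {s. s j = w ! j})"
    then obtain w where w: "P w" "length w = k" "\<And>j. j < k \<Longrightarrow> s j = w ! j" by auto
    have "map s [0..<k] = w" using w(2,3) by (intro nth_equalityI) auto
    then show "s \<in> {s. P (map s [0..<k])}" using w by simp
  qed
  show ?thesis unfolding eq
    apply (rule sets.countable_UN'')
    apply simp
    apply (cases "k = 0")
     apply (simp add: cm_space)
    using sets.top[of cantor_measure] cm_space apply simp
    apply (rule sets.finite_INT)
    apply (auto simp: cm_sets_comp)
    done
qed

lemma map_agree: "(\<forall>i<L. p' i = p i) \<Longrightarrow> k \<le> L \<Longrightarrow> map p' [0..<k] = map p [0..<k]"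
  by (intro map_cong) auto

lemma assoc_agree:
  assumes pos: "0 < a (prod_encode (j, list_encode (map p [0..<L])))"
    and ag: "\<forall>i<L. p' i = p i"
    and q': "assoc_fun a p' = Some q'"
  shows "q' j = a (prod_encode (j, list_encode (map p [0..<(LEAST k. 0 < a (prod_encode (j, list_encode (map p [0..<k]))))]))) - 1"
proof -
  define l where "l = (LEAST k. 0 < a (prod_encode (j, list_encode (map p [0..<k]))))"
  have l1: "0 < a (prod_encode (j, list_encode (map p [0..<l])))"
    unfolding l_def by (rule LeastI[of _ L]) (rule pos)
  have lL: "l \<le> L" unfolding l_def by (rule Least_le) (rule pos)
  have l2: "\<not> 0 < a (prod_encode (j, list_encode (map p [0..<k])))" if "k < l" for k
    using not_less_Least[of k] that unfolding l_def by blast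
  have "(LEAST k. 0 < a (prod_encode (j, list_encode (map p' [0..<k])))) = l"
  proof (rule Least_equality)
    show "0 < a (prod_encode (j, list_encode (map p' [0..<l])))"
      using l1 map_agree[OF ag lL] by metis
  next
    fix k assume "0 < a (prod_encode (j, list_encode (map p' [0..<k])))"
    then show "l \<le> k" using l2[of k] map_agree[OF ag, of k] lL
      by (metis linorder_not_le less_imp_le order_trans)
  qed
  moreover have "q' j = a (prod_encode (j, list_encode (map p' [0..<(LEAST k. 0 < a (prod_encode (j, list_encode (map p' [0..<k]))))]))) - 1"
    using q' unfolding assoc_fun_def by (auto split: if_splits)
  ultimately show ?thesis using map_agree[OF ag lL] unfolding l_def by simp
qed

lemma assoc_some:
  assumes "assoc_fun a p = Some q"
  shows "\<exists>L. 0 < a (prod_encode (j, list_encode (map p [0..<L])))"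
    and "q j = a (prod_encode (j, list_encode (map p [0..<(LEAST k. 0 < a (prod_encode (j, list_encode (map p [0..<k]))))]))) - 1"
  using assms unfolding assoc_fun_def by (auto split: if_splits)

lemma assoc_cont:
  assumes "assoc_fun a p = Some q"
  shows "\<exists>L. \<forall>p' q'. (\<forall>i<L. p' i = p i) \<longrightarrow> assoc_fun a p' = Some q' \<longrightarrow> (\<forall>j<J. q' j = q j)"
proof (induction J)
  case 0 then show ?case by auto
next
  case (Suc J)
  then obtain L1 where L1: "\<forall>p' q'. (\<forall>i<L1. p' i = p i) \<longrightarrow> assoc_fun a p' = Some q' \<longrightarrow> (\<forall>j<J. q' j = q j)" by blast
  obtain L2 where L2: "0 < a (prod_encode (J, list_encode (map p [0..<L2])))" using assoc_some(1)[OF assms] by blast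
  show ?case
  proof (intro exI[of _ "max L1 L2"] allI impI)
    fix p' q' j assume ag: "\<forall>i<max L1 L2. p' i = p i" and q': "assoc_fun a p' = Some q'" and j: "j < Suc J"
    show "q' j = q j"
    proof (cases "j < J")
      case True
      have "\<forall>i<L1. p' i = p i" using ag by auto
      then show ?thesis using L1 q' True by blast
    next
      case False
      then have "j = J" using j by simp
      then show ?thesis using assoc_agree[OF L2 _ q'] ag assoc_some(2)[OF assms, of J] by auto
    qed
  qed
qed

lemma word_inj: "word_of_nat m = word_of_nat m' \<Longrightarrow> m = m'"
proof (induction m arbitrary: m' rule: less_induct)
  case (less m)
  show ?case
  proof (cases m)
    case 0 then show ?thesis using less.prems by (cases m') auto
  next
    case (Suc n)
    then obtain n' where m': "m' = Suc n'" using less.prems by (cases m') auto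
    have "word_of_nat (n div 2) = word_of_nat (n' div 2)" "odd n = odd n'"
      using less.prems Suc m' by auto
    then have "n div 2 = n' div 2" using less.IH[of "n div 2"] Suc by auto
    with \<open>odd n = odd n'\<close> have "n = n'" by (metis div_mult_mod_eq odd_iff_mod_2_eq_one not_mod_2_eq_1_eq_0)
    then show ?thesis using Suc m' by simp
  qed
qed

lemma word_surj: "\<exists>m. word_of_nat m = w \<and> Suc m < 2 ^ Suc (length w)"
proof (induction w rule: rev_induct)
  case Nil then show ?case by (intro exI[of _ 0]) auto
next
  case (snoc b w)
  then obtain m where m: "word_of_nat m = w" "Suc m < 2 ^ Suc (length w)" by blast
  define n where "n = 2 * m + (if b then 1 else 0)"
  have "word_of_nat (Suc n) = w @ [b]" using m unfolding n_def by auto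
  moreover have "Suc (Suc n) < 2 ^ Suc (length (w @ [b]))" using m(2) unfolding n_def by auto
  ultimately show ?case by blast
qed

lemma delta_unit_Some:
  assumes "delta_unit q = Some y"
  shows "y \<in> {0..1}" "\<And>i. \<bar>nu (q i) - y\<bar> \<le> (1/2) ^ i"
proof -
  have ex: "\<exists>x \<in> {0..1}. \<forall>i. \<bar>nu (q i) - x\<bar> \<le> (1/2) ^ i"
    and yd: "y = (THE x. x \<in> {0..1} \<and> (\<forall>i. \<bar>nu (q i) - x\<bar> \<le> (1/2) ^ i))"
    using assms unfolding delta_unit_def by (auto split: if_splits)
  have uniq: "x = x'" if "\<forall>i. \<bar>nu (q i) - x\<bar> \<le> (1/2) ^ i" "\<forall>i. \<bar>nu (q i) - x'\<bar> \<le> (1/2) ^ i" for x x'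
  proof (rule ccontr)
    assume "x \<noteq> x'"
    then have "\<bar>x - x'\<bar> / 2 > 0" by simp
    then obtain i where i: "(1/2::real) ^ i < \<bar>x - x'\<bar> / 2" using real_arch_pow_inv[of "\<bar>x - x'\<bar> / 2" "1/2"] by auto
    have "\<bar>x - x'\<bar> \<le> \<bar>nu (q i) - x\<bar> + \<bar>nu (q i) - x'\<bar>" by linarith
    also have "\<dots> \<le> 2 * (1/2) ^ i" using that[THEN spec, of i] by linarith
    finally have "\<bar>x - x'\<bar> \<le> 2 * (1/2::real) ^ i" .
    moreover have "2 * (1/2::real) ^ i < \<bar>x - x'\<bar>" using i by (simp add: field_simps)
    ultimately show False by simp
  qed
  have "y \<in> {0..1} \<and> (\<forall>i. \<bar>nu (q i) - y\<bar> \<le> (1/2) ^ i)"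
    unfolding yd by (rule theI') (use ex uniq in blast)
  then show "y \<in> {0..1}" "\<And>i. \<bar>nu (q i) - y\<bar> \<le> (1/2) ^ i" by auto
qed

lemma least_agree:
  fixes g g' :: "nat \<Rightarrow> nat"
  assumes "\<forall>L\<le>B. g L = g' L" "L0 \<le> B" "0 < g L0"
  shows "(LEAST L. 0 < g' L) = (LEAST L. 0 < g L)"
proof -
  have "(LEAST L. 0 < g L) \<le> L0" by (rule Least_le) (rule assms(3))
  moreover have "0 < g (LEAST L. 0 < g L)" by (rule LeastI) (rule assms(3))
  ultimately show ?thesis using assms(1,2)
    by (intro Least_equality) (auto, metis assms(1,2) le_trans linorder_not_le not_less_Least less_imp_le)
qed

lemma paths_sets: "paths T \<in> sets cantor_measure"
proof -
  have "paths T = (\<Inter>n. {s. map s [0..<n] \<in> T})" unfolding paths_def by auto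
  then show ?thesis using cm_sets_prefix by (auto intro!: sets.countable_INT)
qed

definition cname :: "(nat \<Rightarrow> bool) \<Rightarrow> baire" where
  "cname s = (\<lambda>j. if s j then 1 else 0)"

lemma delta_cantor_cname: "delta_cantor (cname s) = Some s"
  unfolding delta_cantor_def cname_def by auto

lemma dom_nonempty: "x \<in> star_WWKL_dom \<Longrightarrow> star_WWKL x \<noteq> {}"
proof
  assume "x \<in> star_WWKL_dom" "star_WWKL x = {}"
  then obtain n T where "x = (n, T)" "(1/2::real) ^ n < measure cantor_measure (paths T)" "paths T = {}"
    unfolding star_WWKL_dom_def star_WWKL_def by auto
  moreover have "(0::real) < (1/2) ^ n" by simp
  ultimately show False by simp
qed

definition Gd :: "baire \<Rightarrow> baire option" where
  "Gd \<rho> = (case delta_nat_tree \<rho> of None \<Rightarrow> None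
     | Some x \<Rightarrow> if x \<in> star_WWKL_dom then Some (cname (SOME f. f \<in> star_WWKL x)) else None)"

lemma Gd_realizes: "realizes delta_nat_tree delta_cantor star_WWKL_dom star_WWKL Gd"
  unfolding realizes_def Gd_def
  using dom_nonempty by (auto simp: delta_cantor_cname some_in_eq)

lemma Gs_realizes:
  assumes "delta_nat_tree r = Some x" "x \<in> star_WWKL_dom" "s \<in> star_WWKL x"
  shows "realizes delta_nat_tree delta_cantor star_WWKL_dom star_WWKL (Gd(r := Some (cname s)))"
  using Gd_realizes assms unfolding realizes_def by (auto simp: delta_cantor_cname)

lemma Gd_Some: "Gd \<rho> = Some z \<Longrightarrow> \<exists>x. delta_nat_tree \<rho> = Some x \<and> x \<in> star_WWKL_dom"
  unfolding Gd_def by (auto split: option.splits if_splits)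

lemma delta_closed_p0: "delta_closed (\<lambda>_. 0) = Some {0..1}"
  unfolding delta_closed_def enum_intervals_def by simp

lemma AUC_dom_I: "{0..1} \<in> AUC_dom" "x \<in> {0..1} \<Longrightarrow> {x} \<in> AUC_dom"
  unfolding AUC_dom_def by auto

lemma nu_code: "nu (prod_encode (int_encode z, b)) = real_of_int z / real (Suc b)"
  unfolding nu_def by simp

lemma delta_closed_point:
  fixes x :: real
  assumes "x \<in> {0..1}" "nu c = x"
    and "p' = (\<lambda>j. if j = M then Suc (prod_encode (prod_encode (int_encode (-1), 0), c))
                   else if j = Suc M then Suc (prod_encode (c, prod_encode (int_encode 2, 0))) else 0)"
  shows "delta_closed p' = Some {x}"
proof -
  have "{n. 0 < p' n} = {M, Suc M}" using assms(3) by auto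
  then have "enum_intervals p' = {-1<..<x} \<union> {x<..<2}"
    unfolding enum_intervals_def using assms(2) by (simp add: assms(3) nu_code)
  then show ?thesis unfolding delta_closed_def using assms(1) by auto
qed



lemma dnt_Some: "delta_nat_tree r = Some (n, T) \<Longrightarrow> n = r 0 \<and> T = {word_of_nat m | m. r (2*m+1) = 1}"
  unfolding delta_nat_tree_def delta_tree_def bfst_def bsnd_def by (auto split: option.splits if_splits)

lemma tree_mem: "delta_nat_tree r = Some (n, T) \<Longrightarrow> word_of_nat m \<in> T \<longleftrightarrow> r (2*m+1) = 1"
  using dnt_Some[of r n T] word_inj by auto

lemma main:
  fixes H K :: "baire \<Rightarrow> baire option"
  assumes aH: "\<forall>p q. H p = Some q \<longrightarrow> assoc_fun aH p = Some q"
    and aK: "\<forall>p q. K p = Some q \<longrightarrow> assoc_fun aK p = Some q"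
    and W: "\<forall>G. realizes delta_nat_tree delta_cantor star_WWKL_dom star_WWKL G \<longrightarrow>
           realizes delta_closed delta_unit AUC_dom (\<lambda>A. A)
             (\<lambda>p. case K p of None \<Rightarrow> None
                  | Some r \<Rightarrow> (case G r of None \<Rightarrow> None | Some s \<Rightarrow> H (bpair p s)))"
  shows False
proof -
  have useW: "\<exists>r s q y. K p = Some r \<and> G r = Some s \<and> H (bpair p s) = Some q \<and> delta_unit q = Some y \<and> y \<in> A"
    if R: "realizes delta_nat_tree delta_cantor star_WWKL_dom star_WWKL G" "delta_closed p = Some A" "A \<in> AUC_dom" for G p A
  proof -
    have "realizes delta_closed delta_unit AUC_dom (\<lambda>A. A)
             (\<lambda>p. case K p of None \<Rightarrow> None
                  | Some r \<Rightarrow> (case G r of None \<Rightarrow> None | Some s \<Rightarrow> H (bpair p s)))"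
      using W R(1) by blast
    then obtain q y where "(case K p of None \<Rightarrow> None
                  | Some r \<Rightarrow> (case G r of None \<Rightarrow> None | Some s \<Rightarrow> H (bpair p s))) = Some q"
        "delta_unit q = Some y" "y \<in> A"
      using R(2,3) unfolding realizes_def by blast
    then show ?thesis by (auto split: option.splits)
  qed
  define p0 :: baire where "p0 = (\<lambda>_. 0)"
  obtain r0 z0 where r0: "K p0 = Some r0" "Gd r0 = Some z0"
    using useW[OF Gd_realizes, of p0] delta_closed_p0 AUC_dom_I(1) unfolding p0_def by blast
  obtain n T where nT: "delta_nat_tree r0 = Some (n, T)" "(n, T) \<in> star_WWKL_dom"
    using Gd_Some[OF r0(2)] by auto
  have treeT: "is_tree T" and mT: "(1/2::real) ^ n < measure cantor_measure (paths T)"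
    using nT(2) unfolding star_WWKL_dom_def by auto
  define N :: nat where "N = 2 ^ Suc n"
  define k :: nat where "k = n + 3"
  define x :: "nat \<Rightarrow> real" where "x i = real i / real N" for i
  define f :: "(nat \<Rightarrow> bool) \<Rightarrow> nat \<Rightarrow> nat" where
    "f s L = aH (prod_encode (k, list_encode (map (bpair p0 (cname s)) [0..<L])))" for s L
  define A where "A i M = {s. (\<exists>L \<le> 2 * M. 0 < f s L) \<and> (1/2::real) ^ k < \<bar>nu (f s (LEAST L. 0 < f s L) - 1) - x i\<bar>}" for i M
  have A_dep: "s \<in> A i M \<longleftrightarrow> s' \<in> A i M" if ag: "\<forall>j<M. s j = s' j" for s s' i M
  proof -
    have bp: "\<forall>j<2*M. bpair p0 (cname s') j = bpair p0 (cname s) j"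
      using ag unfolding bpair_def cname_def by auto
    have fe: "\<forall>L\<le>2*M. f s L = f s' L"
      unfolding f_def using map_agree[OF bp] by metis
    have "(\<exists>L \<le> 2 * M. 0 < f s L) \<longleftrightarrow> (\<exists>L \<le> 2 * M. 0 < f s' L)" using fe by auto
    moreover have "f s (LEAST L. 0 < f s L) = f s' (LEAST L. 0 < f s' L)" if L: "L \<le> 2*M" "0 < f s L" for L
    proof -
      have eq: "(LEAST L. 0 < f s' L) = (LEAST L. 0 < f s L)" by (rule least_agree[OF fe L])
      have "(LEAST L. 0 < f s L) \<le> 2*M" using L by (meson Least_le order_trans)
      then show ?thesis using eq fe by simp
    qed
    ultimately show ?thesis unfolding A_def by auto
  qed
  have A_sets: "A i M \<in> sets cantor_measure" for i M
  proof -
    define tr :: "bool list \<Rightarrow> nat \<Rightarrow> bool" where "tr w = (\<lambda>j. if j < length w then w ! j else False)" for w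
    have "s \<in> A i M \<longleftrightarrow> tr (map s [0..<M]) \<in> A i M" for s
      by (rule A_dep) (simp add: tr_def)
    then have eq: "A i M = {s. tr (map s [0..<M]) \<in> A i M}" by blast
    show ?thesis by (subst eq) (rule cm_sets_prefix)
  qed
  have A_mono: "M \<le> M' \<Longrightarrow> A i M \<subseteq> A i M'" for i M M'
    unfolding A_def by clarsimp (metis mult_le_mono2 order_trans)
  have Npos: "(0::real) < real N" unfolding N_def by simp
  have xgap: "1 / real N \<le> \<bar>x i - x j\<bar>" if "i \<noteq> j" for i j
  proof -
    have "1 \<le> \<bar>real i - real j\<bar>" using that by linarith
    then have "1 / real N \<le> \<bar>real i - real j\<bar> / real N" using Npos by (simp add: divide_right_mono)
    also have "\<dots> = \<bar>x i - x j\<bar>" unfolding x_def using Npos by (simp add: diff_divide_distrib[symmetric])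
    finally show ?thesis .
  qed
  have kN: "2 * (1/2::real) ^ k < 1 / real N"
    unfolding k_def N_def by (simp add: power_add field_simps)
  have key0: "s \<in> (\<Union>M. A i M) \<or> s \<in> (\<Union>M. A j M)" if s: "s \<in> paths T" and ij: "i \<noteq> j" for s i j
  proof -
    obtain r s1 q y where R: "K p0 = Some r" "(Gd(r0 := Some (cname s))) r = Some s1" "H (bpair p0 s1) = Some q"
      "delta_unit q = Some y"
      using useW[OF Gs_realizes[OF nT(1) nT(2), of s], of p0] s delta_closed_p0 AUC_dom_I(1)
      unfolding p0_def star_WWKL_def by auto
    have "r = r0" using R(1) r0(1) by simp
    then have s1: "s1 = cname s" using R(2) by simp
    have qa: "assoc_fun aH (bpair p0 (cname s)) = Some q" using aH R(3) s1 by auto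
    obtain L where L: "0 < f s L" using assoc_some(1)[OF qa, of k] unfolding f_def by blast
    have qk: "q k = f s (LEAST L. 0 < f s L) - 1" using assoc_some(2)[OF qa, of k] unfolding f_def by simp
    have yk: "\<bar>nu (q k) - y\<bar> \<le> (1/2) ^ k" using delta_unit_Some(2)[OF R(4)] .
    show ?thesis
    proof (rule ccontr)
      assume "\<not> ?thesis"
      then have "s \<notin> A i L" "s \<notin> A j L" by auto
      moreover have "L \<le> 2 * L" by simp
      ultimately have "\<bar>nu (q k) - x i\<bar> \<le> (1/2) ^ k" "\<bar>nu (q k) - x j\<bar> \<le> (1/2) ^ k"
        using L qk unfolding A_def by auto
      then have "\<bar>x i - x j\<bar> \<le> 2 * (1/2) ^ k" by linarith
      then show False using xgap[OF ij] kN by linarith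
    qed
  qed
  interpret P: prob_space cantor_measure by (rule cm_prob)
  define D where "D i = paths T - (\<Union>M. A i M)" for i
  have D_sets: "D i \<in> sets cantor_measure" for i
    unfolding D_def using paths_sets A_sets by auto
  have disj: "disjoint_family_on D {..<N}"
    unfolding disjoint_family_on_def D_def using key0 by blast
  have "measure cantor_measure (\<Union>i\<in>{..<N}. D i) = (\<Sum>i\<in>{..<N}. measure cantor_measure (D i))"
    by (rule measure_finite_Union) (use D_sets disj in auto)
  moreover have "measure cantor_measure (\<Union>i\<in>{..<N}. D i) \<le> 1" by (rule P.prob_le_1)
  ultimately have sumle: "(\<Sum>i\<in>{..<N}. measure cantor_measure (D i)) \<le> 1" by simp
  obtain i where i: "i < N" "measure cantor_measure (D i) \<le> 1 / real N"
  proof (rule ccontr)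
    assume "\<not> thesis"
    then have "\<forall>i\<in>{..<N}. 1 / real N < measure cantor_measure (D i)" using that by force
    then have "(\<Sum>i\<in>{..<N}. 1 / real N) < (\<Sum>i\<in>{..<N}. measure cantor_measure (D i))"
      using Npos by (intro sum_strict_mono) auto
    then show False using sumle Npos by simp
  qed
  define E where "E l = {s. map s [0..<l] \<in> T} - A i l" for l
  have E_sets: "range E \<subseteq> sets cantor_measure"
    unfolding E_def using cm_sets_prefix A_sets by auto
  have Cmono: "map s [0..<l] \<in> T" if "map s [0..<l'] \<in> T" "l \<le> l'" for s l l'
  proof -
    have "map s [0..<l'] = map s [0..<l] @ map s [l..<l']"
      using that(2) by (metis map_append le_add_diff_inverse upt_add_eq_append zero_le)
    then show ?thesis using treeT that(1) unfolding is_tree_def by metis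
  qed
  have Edec: "decseq E"
    unfolding decseq_def E_def using Cmono A_mono by blast
  have Eint: "(\<Inter>l. E l) = D i"
  proof
    show "(\<Inter>l. E l) \<subseteq> D i"
      unfolding E_def D_def paths_def using A_mono by blast
    show "D i \<subseteq> (\<Inter>l. E l)"
      unfolding E_def D_def paths_def by blast
  qed
  have lim: "(\<lambda>l. measure cantor_measure (E l)) \<longlonglongrightarrow> measure cantor_measure (D i)"
    using P.finite_Lim_measure_decseq[OF E_sets Edec] Eint by simp
  have "measure cantor_measure (D i) < (1/2) ^ n"
    using i(2) unfolding N_def by (simp add: field_simps)
  then have "eventually (\<lambda>l. measure cantor_measure (E l) < (1/2) ^ n) sequentially"
    using lim order_tendstoD(2) by blast
  then obtain l where l: "measure cantor_measure (E l) < (1/2) ^ n"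
    by (meson eventually_sequentially order_refl)
  define J :: nat where "J = 2 ^ (l + 2)"
  have r0a: "assoc_fun aK p0 = Some r0" using aK r0(1) by auto
  obtain LK where LK: "\<forall>p' q'. (\<forall>i<LK. p' i = p0 i) \<longrightarrow> assoc_fun aK p' = Some q' \<longrightarrow> (\<forall>j<J. q' j = r0 j)"
    using assoc_cont[OF r0a, of J] by blast
  define M where "M = max l LK"
  define c where "c = prod_encode (int_encode (int i), N - 1)"
  have N1: "1 \<le> N" unfolding N_def by simp
  have nuc: "nu c = x i" unfolding c_def x_def using N1 by (simp add: nu_code)
  have xi01: "x i \<in> {0..1}" unfolding x_def using i(1) Npos by auto
  define p' :: baire where "p' = (\<lambda>j. if j = M then Suc (prod_encode (prod_encode (int_encode (-1), 0), c))
                   else if j = Suc M then Suc (prod_encode (c, prod_encode (int_encode 2, 0))) else 0)"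
  have dp': "delta_closed p' = Some {x i}" by (rule delta_closed_point[OF xi01 nuc p'_def])
  have p'ag: "\<forall>j<M. p' j = p0 j" unfolding p'_def p0_def by auto
  obtain r' z' where r': "K p' = Some r'" "Gd r' = Some z'"
    using useW[OF Gd_realizes dp' AUC_dom_I(2)[OF xi01]] by blast
  obtain n' T' where nT': "delta_nat_tree r' = Some (n', T')" "(n', T') \<in> star_WWKL_dom"
    using Gd_Some[OF r'(2)] by auto
  have r'a: "assoc_fun aK p' = Some r'" using aK r'(1) by auto
  have "\<forall>j<LK. p' j = p0 j" using p'ag unfolding M_def by auto
  then have rag: "\<forall>j<J. r' j = r0 j" using LK r'a by blast
  have "0 < J" unfolding J_def by simp
  then have "n' = n" using rag dnt_Some[OF nT'(1)] dnt_Some[OF nT(1)] by auto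
  then have mT': "(1/2::real) ^ n < measure cantor_measure (paths T')"
    using nT'(2) unfolding star_WWKL_dom_def by auto
  have wT: "w \<in> T" if "w \<in> T'" "length w \<le> l" for w
  proof -
    obtain m where m: "word_of_nat m = w" "Suc m < 2 ^ Suc (length w)" using word_surj by blast
    have "(2::nat) ^ Suc (length w) \<le> 2 ^ Suc l" using that(2) by (intro power_increasing) auto
    then have "Suc m < 2 ^ Suc l" using m(2) by linarith
    then have "2*m+1 < 2 * 2 ^ Suc l" by linarith
    then have "2*m+1 < J" unfolding J_def by (simp add: power_add)
    then show ?thesis using tree_mem[OF nT'(1), of m] tree_mem[OF nT(1), of m] rag m(1) that(1) by auto
  qed
  have pT': "paths T' \<subseteq> {s. map s [0..<l] \<in> T}"
    unfolding paths_def using wT by auto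
  obtain s where s: "s \<in> paths T'" "s \<in> A i M"
  proof (rule ccontr)
    assume "\<not> thesis"
    then have "paths T' \<subseteq> E l" using that pT' A_mono[of l M i] unfolding E_def M_def by auto
    then have "measure cantor_measure (paths T') \<le> measure cantor_measure (E l)"
      using E_sets by (intro P.finite_measure_mono) auto
    then show False using l mT' by simp
  qed
  obtain r s1 q y where R: "K p' = Some r" "(Gd(r' := Some (cname s))) r = Some s1" "H (bpair p' s1) = Some q"
      "delta_unit q = Some y" "y \<in> {x i}"
    using useW[OF Gs_realizes[OF nT'(1) nT'(2), of s] dp' AUC_dom_I(2)[OF xi01]] s(1)
    unfolding star_WWKL_def by auto
  have "r = r'" using R(1) r'(1) by simp
  then have s1: "s1 = cname s" using R(2) by simp
  have qa: "assoc_fun aH (bpair p' (cname s)) = Some q" using aH R(3) s1 by auto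
  obtain L where L: "L \<le> 2 * M" "0 < f s L" and far: "(1/2::real) ^ k < \<bar>nu (f s (LEAST L. 0 < f s L) - 1) - x i\<bar>"
    using s(2) unfolding A_def by auto
  have bag: "\<forall>j<L. bpair p' (cname s) j = bpair p0 (cname s) j"
    using L(1) p'ag unfolding bpair_def by auto
  have "q k = f s (LEAST L. 0 < f s L) - 1"
    using assoc_agree[OF L(2)[unfolded f_def] bag qa] unfolding f_def by simp
  moreover have "\<bar>nu (q k) - y\<bar> \<le> (1/2) ^ k" using delta_unit_Some(2)[OF R(4)] .
  ultimately show False using far R(5) by simp
qed

theorem theorem16p5:
  shows "\<not> weihrauch_le delta_closed delta_unit AUC_dom (\<lambda>A. A)
                        delta_nat_tree delta_cantor star_WWKL_dom star_WWKL"
proof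
  assume "weihrauch_le delta_closed delta_unit AUC_dom (\<lambda>A. A)
                        delta_nat_tree delta_cantor star_WWKL_dom star_WWKL"
  then obtain H K where c: "computable_partial H" "computable_partial K" and
    W: "\<forall>G. realizes delta_nat_tree delta_cantor star_WWKL_dom star_WWKL G \<longrightarrow>
           realizes delta_closed delta_unit AUC_dom (\<lambda>A. A)
             (\<lambda>p. case K p of None \<Rightarrow> None
                  | Some r \<Rightarrow> (case G r of None \<Rightarrow> None | Some s \<Rightarrow> H (bpair p s)))"
    unfolding weihrauch_le_def by blast
  obtain aH where aH: "\<forall>p q. H p = Some q \<longrightarrow> assoc_fun aH p = Some q"
    using c(1) unfolding computable_partial_def by blast
  obtain aK where aK: "\<forall>p q. K p = Some q \<longrightarrow> assoc_fun aK p = Some q"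
    using c(2) unfolding computable_partial_def by blast
  show False by (rule main[OF aH aK W])
qed


end
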